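(* Let $\varepsilon\in(0,\tfrac12)$. Let $G$ and $H$ be bipartite graphs, both with vertex classes $Z$ and $W$, where $|Z|=z$, $|W|=n$, and $z>\tfrac{2}{\varepsilon}$. Suppose that (1) $d_G(x)>\left(\tfrac12+\varepsilon\right)n$ for all $x\in Z$; (2) $d_G(y)>\left(\tfrac12+\tfrac{\varepsilon}{2}\right)z$ for all $y\in W$; (3) there is an $M\in\mathbb{N}$ and a $\delta\le\tfrac{\varepsilon}{10}$ such that $M\le d_H(x)\le M(1+\delta)$ for all $x\in Z$; (4) $d_H(y)=1$ for all $y\in W$. Then $H$ can be embedded into $G$, i.e. $G$ contains a subgraph isomorphic to $H$ via an isomorphism mapping $Z$ onto $Z$ and $W$ onto $W$.
   Context: All graphs are simple. $d_G(v)$ denotes the degree of vertex $v$ in graph $G$. *)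

theory Defs
  imports Complex_Main
begin

(* A simple graph on a vertex type 'a is given by a set of edges, each edge
   being a 2-element set of vertices. *)

definition bipartite_graph :: "'a set \<Rightarrow> 'a set \<Rightarrow> 'a set set \<Rightarrow> bool" where
  "bipartite_graph Z W E \<longleftrightarrow>
     finite Z \<and> finite W \<and> Z \<inter> W = {} \<and>
     (\<forall>e\<in>E. \<exists>x\<in>Z. \<exists>y\<in>W. e = {x, y})"

definition degree :: "'a set set \<Rightarrow> 'a \<Rightarrow> nat" where
  "degree E v = card {e\<in>E. v \<in> e}"

definition bip_embeds :: "'a set \<Rightarrow> 'a set \<Rightarrow> 'a set set \<Rightarrow> 'a set set \<Rightarrow> bool" where
  "bip_embeds Z W H G \<longleftrightarrow>
     (\<exists>f. bij_betw f Z Z \<and> bij_betw f W W \<and>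
          (\<forall>e\<in>H. f ` e \<in> G))"

end

theory Submission imports Defs begin
lemma hall:
  fixes I :: "'i set" and A :: "'i \<Rightarrow> 'b set"
  assumes "finite I" "\<forall>i\<in>I. finite (A i)" "\<forall>J\<subseteq>I. card J \<le> card (\<Union> (A ` J))"
  shows "\<exists>f. inj_on f I \<and> (\<forall>i\<in>I. f i \<in> A i)"
  using assms
proof (induction "card I" arbitrary: I A rule: less_induct)
  case less
  note fin = less.prems(1) and finA = less.prems(2) and hc = less.prems(3)
  show ?case
  proof (cases "I = {}")
    case True then show ?thesis by auto
  next
    case Ine: False
    show ?thesis
    proof (cases "\<exists>J. J \<subseteq> I \<and> J \<noteq> {} \<and> J \<noteq> I \<and> card (\<Union>(A`J)) = card J")
      case True
      then obtain J where J: "J \<subseteq> I" "J \<noteq> {}" "J \<noteq> I" "card (\<Union>(A`J)) = card J" by blast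
      define U where "U = \<Union>(A`J)"
      have finJ: "finite J" using J fin finite_subset by blast
      have finU: "finite U" unfolding U_def using finJ finA J by auto
      have "card J < card I" using J fin by (meson psubsetI psubset_card_mono)
      moreover have "\<forall>J'\<subseteq>J. card J' \<le> card (\<Union> (A ` J'))" using hc J by auto
      ultimately obtain f1 where f1: "inj_on f1 J" "\<forall>i\<in>J. f1 i \<in> A i"
        using less.hyps[of J A] finJ finA J by blast
      define B where "B i = A i - U" for i
      have "card (I - J) < card I" using J fin
        by (metis Diff_subset card_seteq finite_Diff leI subset_Diff_insert subsetI Diff_eq_empty_iff Diff_Diff_Int inf.absorb2 psubsetI psubset_card_mono Diff_cancel)
      moreover have "\<forall>K\<subseteq>I - J. card K \<le> card (\<Union> (B ` K))"
      proof (intro allI impI)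
        fix K assume K: "K \<subseteq> I - J"
        have finK: "finite K" using K fin finite_subset by blast
        have eq: "\<Union> (B ` K) = \<Union>(A`(K\<union>J)) - U" unfolding B_def U_def by auto
        have sub: "U \<subseteq> \<Union>(A`(K\<union>J))" unfolding U_def by auto
        have finKJ: "finite (\<Union>(A`(K\<union>J)))" using finK finJ finA K J by auto
        have "card (\<Union> (B ` K)) = card (\<Union>(A`(K\<union>J))) - card U"
          using eq sub finU finKJ by (simp add: card_Diff_subset)
        moreover have "card (K \<union> J) \<le> card (\<Union>(A`(K\<union>J)))" using hc K J by (meson Diff_subset Un_least order_trans)
        moreover have "card (K \<union> J) = card K + card J" using K finK finJ
          by (subst card_Un_disjoint) auto
        moreover have "card U = card J" using J U_def by simp
        ultimately show "card K \<le> card (\<Union> (B ` K))" by linarith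
      qed
      ultimately obtain f2 where f2: "inj_on f2 (I-J)" "\<forall>i\<in>I-J. f2 i \<in> B i"
        using less.hyps[of "I-J" B] fin finA unfolding B_def by auto
      define f where "f i = (if i \<in> J then f1 i else f2 i)" for i
      have "inj_on f I"
      proof (rule inj_onI)
        fix a b assume ab: "a \<in> I" "b \<in> I" "f a = f b"
        show "a = b"
        proof (cases "a \<in> J"; cases "b \<in> J")
          assume "a \<in> J" "b \<in> J" then show ?thesis using ab f1 unfolding f_def by (auto dest: inj_onD)
        next
          assume "a \<notin> J" "b \<notin> J" then show ?thesis using ab f2 unfolding f_def by (auto dest: inj_onD)
        next
          assume "a \<in> J" "b \<notin> J"
          then have "f a \<in> U" "f b \<notin> U" using f1 f2 ab unfolding f_def U_def B_def by auto
          then show ?thesis using ab by simp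
        next
          assume "a \<notin> J" "b \<in> J"
          have fb: "f b \<in> U" using f1 \<open>b \<in> J\<close> unfolding f_def U_def by auto
          have "a \<in> I - J" using ab \<open>a \<notin> J\<close> by auto
          then have "f a \<notin> U" using f2 \<open>a \<notin> J\<close> unfolding f_def B_def by auto
          then show ?thesis using ab fb by metis
        qed
      qed
      moreover have "\<forall>i\<in>I. f i \<in> A i" using f1 f2 unfolding f_def B_def by auto
      ultimately show ?thesis by blast
    next
      case False
      obtain i0 where i0: "i0 \<in> I" using Ine by blast
      have "card {i0} \<le> card (A i0)" using hc[rule_format, of "{i0}"] i0 by simp
      then have "A i0 \<noteq> {}" by auto
      then obtain x where x: "x \<in> A i0" by blast
      define B where "B i = A i - {x}" for i
      have "card (I - {i0}) < card I" using i0 fin by (meson card_Diff1_less)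
      moreover have "\<forall>K\<subseteq>I - {i0}. card K \<le> card (\<Union> (B ` K))"
      proof (intro allI impI)
        fix K assume K: "K \<subseteq> I - {i0}"
        show "card K \<le> card (\<Union> (B ` K))"
        proof (cases "K = {}")
          case True then show ?thesis by simp
        next
          case Kne: False
          have "K \<noteq> I" using K i0 by auto
          then have "card (\<Union>(A`K)) \<noteq> card K" using False K Kne by auto
          moreover have "card K \<le> card (\<Union>(A`K))" using hc K by auto
          moreover have "\<Union> (B ` K) = \<Union>(A`K) - {x}" unfolding B_def by auto
          moreover have "card (\<Union>(A`K) - {x}) \<ge> card (\<Union>(A`K)) - 1"
            by (metis card_Diff_singleton_if diff_le_self order_refl)
          ultimately show ?thesis by (metis (no_types, lifting) order.trans le_neq_implies_less less_Suc_eq_le Suc_diff_1 zero_less_iff_neq_zero le_zero_eq)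
        qed
      qed
      ultimately obtain f2 where f2: "inj_on f2 (I-{i0})" "\<forall>i\<in>I-{i0}. f2 i \<in> B i"
        using less.hyps[of "I-{i0}" B] fin finA unfolding B_def by auto
      define f where "f = f2(i0 := x)"
      have "inj_on f I"
      proof (rule inj_onI)
        fix a b assume ab: "a \<in> I" "b \<in> I" "f a = f b"
        show "a = b"
          using ab f2 unfolding f_def B_def by (cases "a = i0"; cases "b = i0") (auto dest: inj_onD)
      qed
      moreover have "\<forall>i\<in>I. f i \<in> A i" using f2 x unfolding f_def B_def by auto
      ultimately show ?thesis by blast
    qed
  qed
qed
lemma degZ:
  assumes "bipartite_graph Z W E" "x \<in> Z"
  shows "degree E x = card {y\<in>W. {x,y}\<in>E}"
proof -
  have d: "Z \<inter> W = {}" and e: "\<forall>e\<in>E. \<exists>x\<in>Z. \<exists>y\<in>W. e = {x, y}"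
    using assms(1) unfolding bipartite_graph_def by auto
  have "{e\<in>E. x\<in>e} = (\<lambda>y. {x,y}) ` {y\<in>W. {x,y}\<in>E}"
  proof
    show "{e\<in>E. x\<in>e} \<subseteq> (\<lambda>y. {x,y}) ` {y\<in>W. {x,y}\<in>E}"
    proof
      fix e assume ee: "e \<in> {e\<in>E. x\<in>e}"
      then have "e \<in> E" "x \<in> e" by auto
      moreover obtain a b where "a\<in>Z" "b\<in>W" "e = {a,b}" using e \<open>e \<in> E\<close> by blast
      ultimately have "a\<in>Z" "b\<in>W" "e = {a,b}" "e \<in> E" "x \<in> e" by auto
      moreover have "x \<noteq> b" using d assms(2) \<open>b\<in>W\<close> by auto
      ultimately show "e \<in> (\<lambda>y. {x,y}) ` {y\<in>W. {x,y}\<in>E}" by auto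
    qed
  qed auto
  moreover have "inj_on (\<lambda>y. {x,y}) {y\<in>W. {x,y}\<in>E}"
    using d assms(2) by (auto intro!: inj_onI simp: doubleton_eq_iff)
  ultimately show ?thesis unfolding degree_def by (simp add: card_image)
qed

lemma degW:
  assumes "bipartite_graph Z W E" "y \<in> W"
  shows "degree E y = card {x\<in>Z. {x,y}\<in>E}"
proof -
  have d: "Z \<inter> W = {}" and e: "\<forall>e\<in>E. \<exists>x\<in>Z. \<exists>y\<in>W. e = {x, y}"
    using assms(1) unfolding bipartite_graph_def by auto
  have "{e\<in>E. y\<in>e} = (\<lambda>x. {x,y}) ` {x\<in>Z. {x,y}\<in>E}"
  proof
    show "{e\<in>E. y\<in>e} \<subseteq> (\<lambda>x. {x,y}) ` {x\<in>Z. {x,y}\<in>E}"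
    proof
      fix e assume ee: "e \<in> {e\<in>E. y\<in>e}"
      then have "e \<in> E" "y \<in> e" by auto
      moreover obtain a b where "a\<in>Z" "b\<in>W" "e = {a,b}" using e \<open>e \<in> E\<close> by blast
      ultimately have "a\<in>Z" "b\<in>W" "e = {a,b}" "e \<in> E" "y \<in> e" by auto
      moreover have "y \<noteq> a" using d assms(2) \<open>a\<in>Z\<close> by auto
      ultimately show "e \<in> (\<lambda>x. {x,y}) ` {x\<in>Z. {x,y}\<in>E}" by auto
    qed
  qed auto
  moreover have "inj_on (\<lambda>x. {x,y}) {x\<in>Z. {x,y}\<in>E}"
    using d assms(2) by (auto intro!: inj_onI simp: doubleton_eq_iff)
  ultimately show ?thesis unfolding degree_def by (simp add: card_image)
qed

theorem lemma2:
  fixes Z W :: "'a set" and G H :: "'a set set"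
    and \<epsilon> \<delta> :: real and M :: nat
  assumes eps: "0 < \<epsilon>" "\<epsilon> < 1/2"
    and G: "bipartite_graph Z W G" and H: "bipartite_graph Z W H"
    and z: "real (card Z) > 2 / \<epsilon>"
    and d1: "\<forall>x\<in>Z. real (degree G x) > (1/2 + \<epsilon>) * real (card W)"
    and d2: "\<forall>y\<in>W. real (degree G y) > (1/2 + \<epsilon>/2) * real (card Z)"
    and d3: "\<delta> \<le> \<epsilon> / 10"
      "\<forall>x\<in>Z. real M \<le> real (degree H x) \<and> real (degree H x) \<le> real M * (1 + \<delta>)"
    and d4: "\<forall>y\<in>W. degree H y = 1"
  shows "bip_embeds Z W H G"
proof -
  have finZ: "finite Z" and finW: "finite W" and disj: "Z \<inter> W = {}"
    and He: "\<forall>e\<in>H. \<exists>x\<in>Z. \<exists>y\<in>W. e = {x, y}"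
    using G H unfolding bipartite_graph_def by auto
  define c where "c y = (SOME x. x\<in>Z \<and> {x,y}\<in>H)" for y
  have cH: "c y \<in> Z \<and> {c y, y} \<in> H \<and> (\<forall>x\<in>Z. {x,y}\<in>H \<longrightarrow> x = c y)" if y: "y \<in> W" for y
  proof -
    have "card {x\<in>Z. {x,y}\<in>H} = 1" using degW[OF H y] d4 y by simp
    then obtain x0 where x0: "{x\<in>Z. {x,y}\<in>H} = {x0}" by (auto simp: card_1_singleton_iff)
    then have "c y = x0" unfolding c_def by (metis (no_types, lifting) mem_Collect_eq singletonD singletonI someI_ex)
    then show ?thesis using x0 by auto
  qed
  define L where "L x = {y\<in>W. {x,y}\<in>H}" for x
  have cardL: "card (L x) = degree H x" if "x \<in> Z" for x
    using degZ[OF H that] unfolding L_def by simp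
  have L_c: "L x = {y\<in>W. c y = x}" if "x \<in> Z" for x
    using cH that unfolding L_def by blast
  have finL: "finite (L x)" for x using finW unfolding L_def by auto
  have WU: "W = (\<Union>x\<in>Z. L x)" using cH L_c by auto
  have "card W = (\<Sum>x\<in>Z. card (L x))"
    unfolding WU by (rule card_UN_disjoint[OF finZ]) (auto simp: L_c finW)
  then have sumW: "real (card W) = (\<Sum>x\<in>Z. real (degree H x))"
    using cardL by simp
  have zMW: "real (card Z) * real M \<le> real (card W)"
  proof -
    have "(\<Sum>x\<in>Z. real M) \<le> (\<Sum>x\<in>Z. real (degree H x))"
      by (rule sum_mono) (use d3 in auto)
    then show ?thesis using sumW by simp
  qed
  have Zne: "Z \<noteq> {}" using z eps by auto
  then obtain x0 where x0: "x0 \<in> Z" by blast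
  have MD: "real M \<le> real M * (1 + \<delta>)" using d3(2) x0 by force
  define N where "N x = {y\<in>W. {x,y}\<in>G}" for x
  define A where "A y = N (c y)" for y
  have degN: "degree G x = card (N x)" if "x \<in> Z" for x
    using degZ[OF G that] unfolding N_def by simp
  have AW: "A y \<subseteq> W" for y unfolding A_def N_def by auto
  have hallc: "\<forall>J\<subseteq>W. card J \<le> card (\<Union> (A ` J))"
  proof (intro allI impI)
    fix J assume J: "J \<subseteq> W"
    have finU: "finite (\<Union> (A ` J))" using AW finW by (meson UN_least finite_subset)
    show "card J \<le> card (\<Union> (A ` J))"
    proof (cases "J = {}")
      case True then show ?thesis by simp
    next
      case Jne: False
      define X where "X = c ` J"
      have XZ: "X \<subseteq> Z" using cH J unfolding X_def by auto
      show ?thesis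
      proof (cases "\<forall>w\<in>W. \<exists>x\<in>X. {x,w}\<in>G")
        case True
        have "W \<subseteq> \<Union> (A ` J)"
        proof
          fix w assume "w \<in> W"
          then obtain x where "x \<in> X" "{x,w}\<in>G" using True by blast
          then obtain y where "y \<in> J" "x = c y" unfolding X_def by auto
          then show "w \<in> \<Union> (A ` J)" using \<open>w\<in>W\<close> \<open>{x,w}\<in>G\<close> unfolding A_def N_def by auto
        qed
        then have "card W \<le> card (\<Union> (A ` J))" using finU by (simp add: card_mono)
        moreover have "card J \<le> card W" using J finW by (simp add: card_mono)
        ultimately show ?thesis by simp
      next
        case False
        then obtain w where w: "w \<in> W" "\<forall>x\<in>X. {x,w}\<notin>G" by blast
        have "{x\<in>Z. {x,w}\<in>G} \<subseteq> Z - X" using w by auto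
        then have "card {x\<in>Z. {x,w}\<in>G} \<le> card (Z - X)" using finZ by (simp add: card_mono)
        also have "card (Z - X) = card Z - card X" using XZ finZ by (meson card_Diff_subset finite_subset)
        finally have "degree G w \<le> card Z - card X" using degW[OF G w(1)] by simp
        moreover have "card X \<le> card Z" using XZ finZ by (simp add: card_mono)
        ultimately have "real (degree G w) \<le> real (card Z) - real (card X)" by linarith
        then have Xsmall: "real (card X) < (1/2 - \<epsilon>/2) * real (card Z)"
        proof -
          have "real (degree G w) > (1/2 + \<epsilon>/2) * real (card Z)" using d2 w(1) by blast
          moreover have "(1/2 - \<epsilon>/2) * real (card Z) = real (card Z) - (1/2 + \<epsilon>/2) * real (card Z)"
            by (simp add: algebra_simps)
          ultimately show ?thesis using \<open>real (degree G w) \<le> real (card Z) - real (card X)\<close> by linarith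
        qed
        have "J \<subseteq> (\<Union>x\<in>X. L x)"
        proof
          fix y assume "y \<in> J"
          then have "y \<in> L (c y)" "c y \<in> X" using J cH L_c unfolding X_def by auto
          then show "y \<in> (\<Union>x\<in>X. L x)" by blast
        qed
        then have "card J \<le> card (\<Union>x\<in>X. L x)" using finL finZ XZ
          by (meson card_mono finite_UN_I finite_subset)
        also have "\<dots> \<le> (\<Sum>x\<in>X. card (L x))" by (rule card_UN_le) (use finZ XZ finite_subset in auto)
        finally have "real (card J) \<le> (\<Sum>x\<in>X. real (degree H x))"
          using cardL XZ by (metis (no_types, lifting) of_nat_le_iff of_nat_sum subsetD sum.cong)
        also have "\<dots> \<le> (\<Sum>x\<in>X. real M * (1 + \<delta>))"
          by (rule sum_mono) (use d3 XZ in auto)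
        also have "\<dots> = real (card X) * (real M * (1 + \<delta>))" by simp
        also have "\<dots> \<le> (1/2 - \<epsilon>/2) * real (card Z) * (real M * (1 + \<delta>))"
          using Xsmall MD by (intro mult_right_mono) auto
        also have "\<dots> \<le> real (card Z) * real M / 2"
        proof (cases "M = 0")
          case True then show ?thesis by simp
        next
          case False
          then have "\<delta> \<ge> 0" using MD by (smt (verit) mult_le_cancel_left1 of_nat_0_less_iff bot_nat_0.not_eq_extremum)
          have "(1/2 - \<epsilon>/2) * (1 + \<delta>) \<le> (1/2 - \<epsilon>/2) * (1 + \<epsilon>/10)"
            using eps d3(1) by (intro mult_left_mono) auto
          also have "\<dots> \<le> 1/2" using eps by (simp add: algebra_simps)
          finally have k: "(1/2 - \<epsilon>/2) * (1 + \<delta>) \<le> 1/2" .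
          have "(1/2 - \<epsilon>/2) * real (card Z) * (real M * (1 + \<delta>))
              = ((1/2 - \<epsilon>/2) * (1 + \<delta>)) * (real (card Z) * real M)" by (simp add: algebra_simps)
          also have "\<dots> \<le> 1/2 * (real (card Z) * real M)"
            using k by (intro mult_right_mono) auto
          finally show ?thesis by simp
        qed
        also have "\<dots> \<le> real (card W) / 2" using zMW by simp
        also have "\<dots> < real (degree G (c (SOME j. j \<in> J)))"
        proof -
          have "(SOME j. j \<in> J) \<in> J" using Jne by (simp add: some_in_eq)
          then have "c (SOME j. j \<in> J) \<in> Z" using cH J by auto
          then have "(1/2 + \<epsilon>) * real (card W) < real (degree G (c (SOME j. j \<in> J)))" using d1 by blast
          moreover have "real (card W) / 2 \<le> (1/2 + \<epsilon>) * real (card W)" using eps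
            by (simp add: algebra_simps)
          ultimately show ?thesis by linarith
        qed
        also have "\<dots> \<le> real (card (\<Union> (A ` J)))"
        proof -
          have sj: "(SOME j. j \<in> J) \<in> J" using Jne by (simp add: some_in_eq)
          then have "c (SOME j. j \<in> J) \<in> Z" using cH J by auto
          then have "degree G (c (SOME j. j \<in> J)) = card (A (SOME j. j \<in> J))"
            unfolding A_def using degN by simp
          also have "\<dots> \<le> card (\<Union> (A ` J))" using sj finU by (intro card_mono) auto
          finally show ?thesis by simp
        qed
        finally show ?thesis by simp
      qed
    qed
  qed
  obtain g where g: "inj_on g W" "\<forall>y\<in>W. g y \<in> A y"
    using hall[OF finW _ hallc] AW finW finite_subset by metis
  have gW: "g ` W = W"
    using g AW finW by (metis card_image card_subset_eq image_subsetI subsetD)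
  define f where "f v = (if v \<in> W then g v else v)" for v
  have "bij_betw f Z Z"
  proof -
    have "bij_betw id Z Z" by simp
    then show ?thesis by (rule bij_betw_cong[THEN iffD1, rotated]) (use disj in \<open>auto simp: f_def\<close>)
  qed
  moreover have "bij_betw f W W"
  proof -
    have "bij_betw g W W" using g(1) gW by (simp add: bij_betw_def)
    then show ?thesis by (rule bij_betw_cong[THEN iffD1, rotated]) (auto simp: f_def)
  qed
  moreover have "\<forall>e\<in>H. f ` e \<in> G"
  proof
    fix e assume e: "e \<in> H"
    then obtain x y where xy: "x\<in>Z" "y\<in>W" "e = {x,y}" using He by blast
    then have "x = c y" using cH e by auto
    moreover have "f ` e = {x, g y}" using xy disj by (auto simp: f_def)
    moreover have "{c y, g y} \<in> G" using g xy unfolding A_def N_def by auto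
    ultimately show "f ` e \<in> G" by simp
  qed
  ultimately show ?thesis unfolding bip_embeds_def by blast
qed
end
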